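(* Let $n \geq 2$ and let $\sigma = (F_1, \ldots, F_n)$ be a sequence of sets of clauses. Run the following procedure on input $F_1, \ldots, F_n$: 1. Set $V_1 \leftarrow F_1 \setminus F_2$ and $C_1 \leftarrow F_1 \setminus V_1$. 2. For $i = 2, \ldots, n-1$ (in increasing order): (a) set $V_i \leftarrow F_i \setminus F_{i+1}$; (b) set $C_i \leftarrow (F_i \setminus F_{i-1}) \setminus V_i$; (c) for each clause $c \in V_i \cap F_{i-1}$: for $j = 1, \ldots, i-1$ (in increasing order), if $c \in C_j$, then set $C_j \leftarrow C_j \setminus \{c\}$, set $V_k \leftarrow V_k \cup \{c\}$ for every $k$ with $j \leq k \leq i-1$, and stop the loop over $j$ (proceed to the next clause $c$). 3. Set $C_n \leftarrow F_n \setminus F_{n-1}$ and $V_n \leftarrow \emptyset$. Then the procedure terminates, and on termination, for every $i$ with $1 \leq i \leq n$, the set $C_i$ is exactly the set of clauses that are cumulative in $F_i$ with respect to $\sigma$, and the set $V_i$ is exactly the set of clauses that are volatile in $F_i$ with respect to $\sigma$.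
   Context: A clause is a finite set (disjunction) of literals; only set membership of clauses matters here, so clauses may be treated as abstract elements. Given a sequence $\sigma = (F_1, \ldots, F_n)$ of sets of clauses and an index $1 \le i \le n$: - A clause $c$ is volatile in $F_i$ (with respect to $\sigma$) if $c \in F_i$ and there exists $j$ with $i < j \leq n$ such that $c \notin F_j$ (i.e., $c$ is removed at some later point). - A clause $c$ is cumulative in $F_i$ (with respect to $\sigma$) if $c \in F_i$, $c$ appears in $F_i$ for the first time in the sense that either $i = 1$ or $c \notin F_{i-1}$, and $c \in F_j$ for every $j$ with $i < j \leq n$ (i.e., $c$ is never removed afterwards). *)

theory Defs
  imports Main
begin

(* A sequence sigma = (F_1,...,F_n) is modelled as F :: nat => 'c set, of which
   only the values at positions 1..n matter. Clauses are abstract elements 'c. *)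

definition volatile :: "(nat \<Rightarrow> 'c set) \<Rightarrow> nat \<Rightarrow> nat \<Rightarrow> 'c \<Rightarrow> bool" where
  "volatile F n i c \<longleftrightarrow> c \<in> F i \<and> (\<exists>j. i < j \<and> j \<le> n \<and> c \<notin> F j)"

definition cumulative :: "(nat \<Rightarrow> 'c set) \<Rightarrow> nat \<Rightarrow> nat \<Rightarrow> 'c \<Rightarrow> bool" where
  "cumulative F n i c \<longleftrightarrow> c \<in> F i \<and> (i = 1 \<or> c \<notin> F (i - 1)) \<and>
     (\<forall>j. i < j \<and> j \<le> n \<longrightarrow> c \<in> F j)"

type_synonym 'c state = "(nat \<Rightarrow> 'c set) \<times> (nat \<Rightarrow> 'c set)"

function jloop :: "nat \<Rightarrow> nat \<Rightarrow> 'c \<Rightarrow> 'c state \<Rightarrow> 'c state" where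
  "jloop i j c (V, C) =
     (if j < i then
        (if c \<in> C j
         then (\<lambda>k. if j \<le> k \<and> k \<le> i - 1 then V k \<union> {c} else V k,
               C(j := C j - {c}))
         else jloop i (Suc j) c (V, C))
      else (V, C))"
  by pat_completeness auto
termination by (relation "measure (\<lambda>(i, j, _, _). i - j)") auto

(* Stage i (2 \<le> i \<le> n-1) of step 2. The clauses of V_i \<inter> F_{i-1} are processed
   in the order given by the enumeration function enum. *)
definition stage :: "('c set \<Rightarrow> 'c list) \<Rightarrow> (nat \<Rightarrow> 'c set) \<Rightarrow> nat \<Rightarrow> 'c state \<Rightarrow> 'c state" where
  "stage enum F i st =
     (let V1 = (fst st)(i := F i - F (Suc i));
          C1 = (snd st)(i := (F i - F (i - 1)) - V1 i)
      in fold (\<lambda>c. jloop i 1 c) (enum (V1 i \<inter> F (i - 1))) (V1, C1))"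

definition procedure :: "('c set \<Rightarrow> 'c list) \<Rightarrow> (nat \<Rightarrow> 'c set) \<Rightarrow> nat \<Rightarrow> 'c state" where
  "procedure enum F n =
     (let V0 = (\<lambda>_. {})(1 := F 1 - F 2);
          C0 = (\<lambda>_. {})(1 := F 1 - (F 1 - F 2));
          (V, C) = fold (stage enum F) [2..<n] (V0, C0)
      in (V(n := {}), C(n := F n - F (n - 1))))"

end

theory Submission
  imports Defs
begin

lemma jloop_char:
  "(d \<in> fst (jloop i j c (V,C)) k \<longleftrightarrow> d \<in> V k \<or> (d = c \<and> (\<exists>j0. j\<le>j0 \<and> j0<i \<and> c\<in>C j0 \<and> (\<forall>l. j\<le>l \<and> l<j0 \<longrightarrow> c\<notin>C l) \<and> j0\<le>k \<and> k\<le>i-1)))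
 \<and> (d \<in> snd (jloop i j c (V,C)) k \<longleftrightarrow> d \<in> C k \<and> \<not>(d = c \<and> j\<le>k \<and> k<i \<and> (\<forall>l. j\<le>l \<and> l<k \<longrightarrow> c\<notin>C l)))"
proof (induction i j c "(V,C)" arbitrary: V C rule: jloop.induct)
  case (1 i j c V C)
  show ?case
  proof (cases "j < i")
    case True
    show ?thesis
    proof (cases "c \<in> C j")
      case True
      have e: "jloop i j c (V,C) = (\<lambda>k. if j \<le> k \<and> k \<le> i - 1 then V k \<union> {c} else V k, C(j := C j - {c}))"
        using True \<open>j<i\<close> by simp
      have a: "(\<exists>j0. j\<le>j0 \<and> j0<i \<and> c\<in>C j0 \<and> (\<forall>l. j\<le>l \<and> l<j0 \<longrightarrow> c\<notin>C l) \<and> j0\<le>k \<and> k\<le>i-1)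
               \<longleftrightarrow> j \<le> k \<and> k \<le> i - 1"
      proof
        assume "\<exists>j0. j\<le>j0 \<and> j0<i \<and> c\<in>C j0 \<and> (\<forall>l. j\<le>l \<and> l<j0 \<longrightarrow> c\<notin>C l) \<and> j0\<le>k \<and> k\<le>i-1"
        then show "j \<le> k \<and> k \<le> i - 1" by auto
      next
        assume "j \<le> k \<and> k \<le> i - 1"
        then show "\<exists>j0. j\<le>j0 \<and> j0<i \<and> c\<in>C j0 \<and> (\<forall>l. j\<le>l \<and> l<j0 \<longrightarrow> c\<notin>C l) \<and> j0\<le>k \<and> k\<le>i-1"
          using True \<open>j<i\<close> by (intro exI[of _ j]) auto
      qed
      have b: "(j\<le>k \<and> k<i \<and> (\<forall>l. j\<le>l \<and> l<k \<longrightarrow> c\<notin>C l)) \<longleftrightarrow> k = j"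
        using True \<open>j<i\<close> by (auto simp: le_less)
      show ?thesis unfolding e using a b by auto
    next
      case False
      have e: "jloop i j c (V,C) = jloop i (Suc j) c (V,C)"
        using False \<open>j<i\<close> by simp
      have a: "(\<exists>j0. j\<le>j0 \<and> j0<i \<and> c\<in>C j0 \<and> (\<forall>l. j\<le>l \<and> l<j0 \<longrightarrow> c\<notin>C l) \<and> j0\<le>k \<and> k\<le>i-1)
        \<longleftrightarrow> (\<exists>j0. Suc j\<le>j0 \<and> j0<i \<and> c\<in>C j0 \<and> (\<forall>l. Suc j\<le>l \<and> l<j0 \<longrightarrow> c\<notin>C l) \<and> j0\<le>k \<and> k\<le>i-1)"
        proof
        assume "\<exists>j0. j\<le>j0 \<and> j0<i \<and> c\<in>C j0 \<and> (\<forall>l. j\<le>l \<and> l<j0 \<longrightarrow> c\<notin>C l) \<and> j0\<le>k \<and> k\<le>i-1"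
        then obtain j0 where h: "j\<le>j0" "j0<i" "c\<in>C j0" "\<forall>l. j\<le>l \<and> l<j0 \<longrightarrow> c\<notin>C l" "j0\<le>k" "k\<le>i-1" by blast
        have "j0 \<noteq> j" using h(3) False by blast
        then have "Suc j \<le> j0" using h(1) by simp
        then show "\<exists>j0. Suc j\<le>j0 \<and> j0<i \<and> c\<in>C j0 \<and> (\<forall>l. Suc j\<le>l \<and> l<j0 \<longrightarrow> c\<notin>C l) \<and> j0\<le>k \<and> k\<le>i-1"
          using h by (intro exI[of _ j0]) simp
      next
        assume "\<exists>j0. Suc j\<le>j0 \<and> j0<i \<and> c\<in>C j0 \<and> (\<forall>l. Suc j\<le>l \<and> l<j0 \<longrightarrow> c\<notin>C l) \<and> j0\<le>k \<and> k\<le>i-1"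
        then obtain j0 where h: "Suc j\<le>j0" "j0<i" "c\<in>C j0" "\<forall>l. Suc j\<le>l \<and> l<j0 \<longrightarrow> c\<notin>C l" "j0\<le>k" "k\<le>i-1" by blast
        have "\<forall>l. j\<le>l \<and> l<j0 \<longrightarrow> c\<notin>C l"
        proof (intro allI impI)
          fix l assume "j\<le>l \<and> l<j0"
          then show "c\<notin>C l" using h(4) False by (cases "l = j") auto
        qed
        then show "\<exists>j0. j\<le>j0 \<and> j0<i \<and> c\<in>C j0 \<and> (\<forall>l. j\<le>l \<and> l<j0 \<longrightarrow> c\<notin>C l) \<and> j0\<le>k \<and> k\<le>i-1"
          using h by (intro exI[of _ j0]) simp
      qed
      have b: "(d \<in> C k \<and> \<not>(d = c \<and> j\<le>k \<and> k<i \<and> (\<forall>l. j\<le>l \<and> l<k \<longrightarrow> c\<notin>C l))) \<longleftrightarrow>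
               (d \<in> C k \<and> \<not>(d = c \<and> Suc j\<le>k \<and> k<i \<and> (\<forall>l. Suc j\<le>l \<and> l<k \<longrightarrow> c\<notin>C l)))"
      proof (cases "k = j")
        case True then show ?thesis using False by auto
      next
        case kj: False
        have "(\<forall>l. j\<le>l \<and> l<k \<longrightarrow> c\<notin>C l) \<longleftrightarrow> (\<forall>l. Suc j\<le>l \<and> l<k \<longrightarrow> c\<notin>C l)"
        proof
          assume H: "\<forall>l. j\<le>l \<and> l<k \<longrightarrow> c\<notin>C l"
          show "\<forall>l. Suc j\<le>l \<and> l<k \<longrightarrow> c\<notin>C l" using H by auto
        next
          assume H: "\<forall>l. Suc j\<le>l \<and> l<k \<longrightarrow> c\<notin>C l"
          show "\<forall>l. j\<le>l \<and> l<k \<longrightarrow> c\<notin>C l"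
          proof (intro allI impI)
            fix l assume "j\<le>l \<and> l<k"
            then show "c\<notin>C l" using H False by (cases "l = j") auto
          qed
        qed
        moreover have "j\<le>k \<longleftrightarrow> Suc j \<le> k" using kj by auto
        ultimately show ?thesis by simp
      qed
      have ih: "(d \<in> fst (jloop i (Suc j) c (V,C)) k \<longleftrightarrow> d \<in> V k \<or> (d = c \<and> (\<exists>j0. Suc j\<le>j0 \<and> j0<i \<and> c\<in>C j0 \<and> (\<forall>l. Suc j\<le>l \<and> l<j0 \<longrightarrow> c\<notin>C l) \<and> j0\<le>k \<and> k\<le>i-1)))
 \<and> (d \<in> snd (jloop i (Suc j) c (V,C)) k \<longleftrightarrow> d \<in> C k \<and> \<not>(d = c \<and> Suc j\<le>k \<and> k<i \<and> (\<forall>l. Suc j\<le>l \<and> l<k \<longrightarrow> c\<notin>C l)))"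
        using "1" \<open>j<i\<close> False by blast
      show ?thesis unfolding e using ih a b by simp
    qed
  next
    case False
    then have "jloop i j c (V,C) = (V,C)" by simp
    then show ?thesis using False by auto
  qed
qed

lemma jloop_char2:
  "(d \<in> fst (jloop i j c st) k \<longleftrightarrow> d \<in> fst st k \<or> (d = c \<and> (\<exists>j0. j\<le>j0 \<and> j0<i \<and> c\<in>snd st j0 \<and> (\<forall>l. j\<le>l \<and> l<j0 \<longrightarrow> c\<notin>snd st l) \<and> j0\<le>k \<and> k\<le>i-1)))
 \<and> (d \<in> snd (jloop i j c st) k \<longleftrightarrow> d \<in> snd st k \<and> \<not>(d = c \<and> j\<le>k \<and> k<i \<and> (\<forall>l. j\<le>l \<and> l<k \<longrightarrow> c\<notin>snd st l)))"
  by (cases st) (simp only: jloop_char fst_conv snd_conv)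

definition JV where "JV i d st k \<longleftrightarrow> d \<in> fst st k \<or> (\<exists>j0. 1\<le>j0 \<and> j0<i \<and> d\<in>snd st j0 \<and> (\<forall>l. 1\<le>l \<and> l<j0 \<longrightarrow> d\<notin>snd st l) \<and> j0\<le>k \<and> k\<le>i-1)"
definition JC where "JC i d st k \<longleftrightarrow> d \<in> snd st k \<and> \<not>(1\<le>k \<and> k<i \<and> (\<forall>l. 1\<le>l \<and> l<k \<longrightarrow> d\<notin>snd st l))"

lemma fold_jloop:
  "distinct xs \<Longrightarrow>
   (d \<in> fst (fold (\<lambda>c. jloop i 1 c) xs st) k \<longleftrightarrow> (if d \<in> set xs then JV i d st k else d \<in> fst st k)) \<and>
   (d \<in> snd (fold (\<lambda>c. jloop i 1 c) xs st) k \<longleftrightarrow> (if d \<in> set xs then JC i d st k else d \<in> snd st k))"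
proof (induction xs arbitrary: st k)
  case Nil
  then show ?case by simp
next
  case (Cons x xs)
  have ih: "(d \<in> fst (fold (\<lambda>c. jloop i 1 c) xs (jloop i 1 x st)) k \<longleftrightarrow> (if d \<in> set xs then JV i d (jloop i 1 x st) k else d \<in> fst (jloop i 1 x st) k)) \<and>
   (d \<in> snd (fold (\<lambda>c. jloop i 1 c) xs (jloop i 1 x st)) k \<longleftrightarrow> (if d \<in> set xs then JC i d (jloop i 1 x st) k else d \<in> snd (jloop i 1 x st) k))"
    using Cons by simp
  show ?case
  proof (cases "d = x")
    case True
    then have "d \<notin> set xs" using Cons.prems by simp
    then show ?thesis using ih True by (simp add: jloop_char2 JV_def JC_def)
  next
    case False
    have "JV i d (jloop i 1 x st) k = JV i d st k" "JC i d (jloop i 1 x st) k = JC i d st k"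
      unfolding JV_def JC_def using False by (simp_all add: jloop_char2)
    then show ?thesis using ih False by (simp add: jloop_char2)
  qed
qed

definition Vm :: "(nat \<Rightarrow> 'c set) \<Rightarrow> nat \<Rightarrow> nat \<Rightarrow> 'c set" where
 "Vm F m k = (if 1\<le>k \<and> k\<le>m then {c\<in>F k. \<exists>j. k<j \<and> j\<le>Suc m \<and> c\<notin>F j} else {})"
definition Cm :: "(nat \<Rightarrow> 'c set) \<Rightarrow> nat \<Rightarrow> nat \<Rightarrow> 'c set" where
 "Cm F m k = (if 1\<le>k \<and> k\<le>m then {c\<in>F k. (k=1 \<or> c\<notin>F(k-1)) \<and> (\<forall>j. k<j \<and> j\<le>Suc m \<longrightarrow> c\<in>F j)} else {})"

lemma mem_Vm: "d \<in> Vm F m k \<longleftrightarrow> 1\<le>k \<and> k\<le>m \<and> d\<in>F k \<and> (\<exists>j. k<j \<and> j\<le>Suc m \<and> d\<notin>F j)"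
  by (auto simp: Vm_def)
lemma mem_Cm: "d \<in> Cm F m k \<longleftrightarrow> 1\<le>k \<and> k\<le>m \<and> d\<in>F k \<and> (k=1 \<or> d\<notin>F(k-1)) \<and> (\<forall>j. k<j \<and> j\<le>Suc m \<longrightarrow> d\<in>F j)"
  by (auto simp: Cm_def)

lemma stage_step:
  assumes i2: "2 \<le> i" and fin: "finite (F i)"
    and en: "\<And>S. finite S \<Longrightarrow> distinct (enum S) \<and> set (enum S) = S"
  shows "stage enum F i (Vm F (i-1), Cm F (i-1)) = (Vm F i, Cm F i)"
proof -
  define V1 where "V1 = (Vm F (i-1))(i := F i - F (Suc i))"
  define C1 where "C1 = (Cm F (i-1))(i := (F i - F (i - 1)) - V1 i)"
  define W where "W = V1 i \<inter> F (i - 1)"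
  have W: "W = (F i - F (Suc i)) \<inter> F (i - 1)" unfolding W_def V1_def by simp
  have "finite W" unfolding W using fin by auto
  then have dW: "distinct (enum W)" "set (enum W) = W" using en by auto
  have st: "stage enum F i (Vm F (i-1), Cm F (i-1)) = fold (\<lambda>c. jloop i 1 c) (enum W) (V1, C1)"
    unfolding stage_def V1_def C1_def W_def Let_def by simp
  have key: "(d \<in> fst (fold (\<lambda>c. jloop i 1 c) (enum W) (V1, C1)) k \<longleftrightarrow> d \<in> Vm F i k) \<and>
             (d \<in> snd (fold (\<lambda>c. jloop i 1 c) (enum W) (V1, C1)) k \<longleftrightarrow> d \<in> Cm F i k)" for d k
  proof (cases "d \<in> W")
    case True
    then have dF: "d \<in> F i" "d \<notin> F (Suc i)" "d \<in> F (i-1)" unfolding W by auto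
    define P where "P j \<longleftrightarrow> 1\<le>j \<and> j\<le>i \<and> (\<forall>l. j\<le>l \<and> l\<le>i \<longrightarrow> d\<in>F l)" for j
    have Pi1: "P (i-1)" unfolding P_def using dF i2 by (auto simp: le_Suc_eq) (metis Suc_pred' le_antisym le_trans nat_le_linear not_less_eq_eq One_nat_def Suc_1 Suc_le_eq diff_Suc_1 dF(1) dF(3) not_less) 
    define j0 where "j0 = (LEAST j. P j)"
    have Pj0: "P j0" unfolding j0_def using Pi1 by (rule LeastI)
    have j0le: "j0 \<le> i-1" unfolding j0_def using Pi1 by (rule Least_le)
    have j0start: "j0 = 1 \<or> d \<notin> F (j0-1)"
    proof (rule ccontr)
      assume "\<not> (j0 = 1 \<or> d \<notin> F (j0-1))"
      then have "P (j0-1)" using Pj0 unfolding P_def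
        by (auto) (metis Suc_pred' le_SucE le_neq_implies_less less_one not_le Suc_le_eq)
      then have "j0 \<le> j0 - 1" unfolding j0_def by (rule Least_le)
      then show False using Pj0 unfolding P_def by auto
    qed
    have Pj0': "1 \<le> j0" "\<And>l. j0\<le>l \<Longrightarrow> l\<le>i \<Longrightarrow> d\<in>F l" using Pj0 unfolding P_def by auto
    have C1k: "d \<in> C1 k \<longleftrightarrow> k = j0" if k: "1 \<le> k" "k < i" for k
    proof
      assume "d \<in> C1 k"
      then have h: "d\<in>F k" "k=1 \<or> d\<notin>F(k-1)" "\<forall>j. k<j \<and> j\<le>i \<longrightarrow> d\<in>F j"
        using k by (auto simp: C1_def mem_Cm)
      have "P k" unfolding P_def using h k by (auto simp: le_less)
      then have "j0 \<le> k" unfolding j0_def by (rule Least_le)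
      moreover have "\<not> j0 < k"
      proof
        assume "j0 < k"
        then have "k \<noteq> 1" "d \<in> F (k-1)" using Pj0' k by auto
        then show False using h(2) by simp
      qed
      ultimately show "k = j0" by simp
    next
      assume "k = j0"
      then show "d \<in> C1 k" using k Pj0' j0start by (auto simp: C1_def mem_Cm)
    qed
    have ex: "(\<exists>j0'. 1\<le>j0' \<and> j0'<i \<and> d\<in>C1 j0' \<and> (\<forall>l. 1\<le>l \<and> l<j0' \<longrightarrow> d\<notin>C1 l) \<and> j0'\<le>k \<and> k\<le>i-1)
         \<longleftrightarrow> (j0 \<le> k \<and> k \<le> i-1)"
    proof
      assume "\<exists>j0'. 1\<le>j0' \<and> j0'<i \<and> d\<in>C1 j0' \<and> (\<forall>l. 1\<le>l \<and> l<j0' \<longrightarrow> d\<notin>C1 l) \<and> j0'\<le>k \<and> k\<le>i-1"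
      then obtain j' where "1\<le>j'" "j'<i" "d\<in>C1 j'" "j'\<le>k" "k\<le>i-1" by blast
      then show "j0 \<le> k \<and> k \<le> i-1" using C1k by auto
    next
      assume h: "j0 \<le> k \<and> k \<le> i-1"
      have "j0 < i" using j0le i2 by linarith
      moreover have "\<forall>l. 1\<le>l \<and> l<j0 \<longrightarrow> d\<notin>C1 l" using C1k \<open>j0 < i\<close> by auto
      ultimately show "\<exists>j0'. 1\<le>j0' \<and> j0'<i \<and> d\<in>C1 j0' \<and> (\<forall>l. 1\<le>l \<and> l<j0' \<longrightarrow> d\<notin>C1 l) \<and> j0'\<le>k \<and> k\<le>i-1"
        using h Pj0' C1k by (intro exI[of _ j0]) auto
    qed
    have JV: "JV i d (V1,C1) k \<longleftrightarrow> d \<in> V1 k \<or> (j0 \<le> k \<and> k \<le> i-1)"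
      unfolding JV_def using ex by simp
    have JC: "\<not> JC i d (V1,C1) k"
    proof
      assume "JC i d (V1,C1) k"
      then have h: "d \<in> C1 k" "\<not>(1\<le>k \<and> k<i \<and> (\<forall>l. 1\<le>l \<and> l<k \<longrightarrow> d\<notin>C1 l))"
        unfolding JC_def by auto
      show False
      proof (cases "1\<le>k \<and> k<i")
        case True
        then have "k = j0" using h C1k by blast
        then show False using h True C1k by auto
      next
        case False
        then have "k = 0 \<or> k = i \<or> k > i" by auto
        then show False using h(1) dF i2 by (auto simp: C1_def mem_Cm)
      qed
    qed
    have VI: "d \<in> Vm F i k \<longleftrightarrow> 1\<le>k \<and> k\<le>i \<and> d\<in>F k"
      using dF by (auto simp: mem_Vm intro!: exI[of _ "Suc i"])
    have CI: "d \<notin> Cm F i k"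
      using dF by (auto simp: mem_Cm)
    have V1k: "d \<in> V1 k \<or> (j0 \<le> k \<and> k \<le> i-1) \<longleftrightarrow> 1\<le>k \<and> k\<le>i \<and> d\<in>F k"
    proof (cases "1 \<le> k \<and> k < i")
      case True
      have "d \<in> V1 k \<longleftrightarrow> d\<in>F k \<and> (\<exists>j. k<j \<and> j\<le>i \<and> d\<notin>F j)"
        using True i2 by (auto simp: V1_def mem_Vm)
      moreover have "d\<in>F k \<Longrightarrow> \<not>(\<exists>j. k<j \<and> j\<le>i \<and> d\<notin>F j) \<Longrightarrow> j0 \<le> k"
      proof -
        assume "d\<in>F k" "\<not>(\<exists>j. k<j \<and> j\<le>i \<and> d\<notin>F j)"
        then have "P k" unfolding P_def using True by (auto simp: le_less)
        then show "j0 \<le> k" unfolding j0_def by (rule Least_le)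
      qed
      ultimately show ?thesis using True Pj0' by auto
    next
      case False
      then have "k = 0 \<or> k = i \<or> k > i" by auto
      then show ?thesis using dF i2 j0le Pj0' by (auto simp: V1_def mem_Vm)
    qed
    show ?thesis using fold_jloop[OF dW(1), of d i "(V1,C1)" k] dW(2) True JV JC VI CI V1k by simp
  next
    case False
    have nW: "\<not>(d\<in>F i \<and> d\<notin>F(Suc i) \<and> d\<in>F(i-1))" using False unfolding W by auto
    have Vk: "d \<in> V1 k \<longleftrightarrow> d \<in> Vm F i k" and Ck: "d \<in> C1 k \<longleftrightarrow> d \<in> Cm F i k"
    proof -
      consider "k = i" | "k = 0 \<or> k > i" | "1 \<le> k \<and> k < i" by linarith
      then have "(d \<in> V1 k \<longleftrightarrow> d \<in> Vm F i k) \<and> (d \<in> C1 k \<longleftrightarrow> d \<in> Cm F i k)"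
      proof cases
        case 1
        then show ?thesis using i2 by (auto simp: C1_def V1_def mem_Vm mem_Cm le_Suc_eq)
      next
        case 2
        then show ?thesis using i2 by (auto simp: C1_def V1_def mem_Vm mem_Cm)
      next
        case 3
        have run: "d \<in> F (Suc i)" if "d\<in>F k" "\<forall>j. k<j \<and> j\<le>i \<longrightarrow> d\<in>F j"
        proof -
          have "d \<in> F i" using that 3 by auto
          moreover have "d \<in> F (i-1)" using that 3 by (cases "k = i-1") auto
          ultimately show ?thesis using nW by blast
        qed
        have e1: "(\<exists>j. k<j \<and> j\<le>Suc i \<and> d\<notin>F j) \<longleftrightarrow> (\<exists>j. k<j \<and> j\<le>i \<and> d\<notin>F j)" if "d\<in>F k"
          using run[OF that] by (auto simp: le_Suc_eq)
        have e2: "(\<forall>j. k<j \<and> j\<le>Suc i \<longrightarrow> d\<in>F j) \<longleftrightarrow> (\<forall>j. k<j \<and> j\<le>i \<longrightarrow> d\<in>F j)" if "d\<in>F k"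
          using run[OF that] by (auto simp: le_Suc_eq)
        show ?thesis using 3 i2 e1 e2 by (auto simp: C1_def V1_def mem_Vm mem_Cm)
      qed
      then show "d \<in> V1 k \<longleftrightarrow> d \<in> Vm F i k" "d \<in> C1 k \<longleftrightarrow> d \<in> Cm F i k" by auto
    qed
    show ?thesis using fold_jloop[OF dW(1), of d i "(V1,C1)" k] dW(2) False Vk Ck by simp
  qed
  show ?thesis unfolding st using key by (simp add: prod_eq_iff set_eq_iff fun_eq_iff)
qed

lemma fold_stages:
  assumes fin: "\<And>i. 1 \<le> i \<Longrightarrow> i \<le> n \<Longrightarrow> finite (F i)"
    and en: "\<And>S. finite S \<Longrightarrow> distinct (enum S) \<and> set (enum S) = S"
  shows "1 \<le> m \<Longrightarrow> m < n \<Longrightarrow> fold (stage enum F) [2..<Suc m]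
      ((\<lambda>_. {})(1 := F 1 - F 2), (\<lambda>_. {})(1 := F 1 - (F 1 - F 2))) = (Vm F m, Cm F m)"
proof (induction m)
  case 0 then show ?case by simp
next
  case (Suc m)
  show ?case
  proof (cases "m = 0")
    case True
    have "(\<lambda>_. {})(1 := F 1 - F 2) = Vm F 1"
      by (rule ext) (auto simp: Vm_def le_Suc_eq numeral_2_eq_2)
    moreover have "(\<lambda>_. {})(1 := F 1 - (F 1 - F 2)) = Cm F 1"
      by (rule ext) (auto simp: Cm_def le_Suc_eq numeral_2_eq_2)
    ultimately show ?thesis using True by simp
  next
    case False
    have "[2..<Suc (Suc m)] = [2..<Suc m] @ [Suc m]" using False by simp
    then show ?thesis using Suc False stage_step[of "Suc m" F enum] fin[of "Suc m"] en by simp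
  qed
qed

theorem mainTheorem1:
  fixes F :: "nat \<Rightarrow> 'c set" and n :: nat and enum :: "'c set \<Rightarrow> 'c list"
  assumes "n \<ge> 2"
    and "\<And>i. 1 \<le> i \<Longrightarrow> i \<le> n \<Longrightarrow> finite (F i)"
    and "\<And>S. finite S \<Longrightarrow> distinct (enum S) \<and> set (enum S) = S"
  shows "\<forall>i. 1 \<le> i \<and> i \<le> n \<longrightarrow>
           snd (procedure enum F n) i = {c. cumulative F n i c} \<and>
           fst (procedure enum F n) i = {c. volatile F n i c}"
proof -
  have u: "[2..<n] = [2..<Suc (n-1)]" using assms(1) by simp
  have f: "fold (stage enum F) [2..<n] ((\<lambda>_. {})(1 := F 1 - F 2), (\<lambda>_. {})(1 := F 1 - (F 1 - F 2))) = (Vm F (n-1), Cm F (n-1))"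
    unfolding u using fold_stages[where n=n and F=F and enum=enum and m="n-1", OF assms(2) assms(3)] assms(1) by simp
  have p: "procedure enum F n = ((Vm F (n-1))(n := {}), (Cm F (n-1))(n := F n - F (n - 1)))"
    unfolding procedure_def Let_def f by simp
  show ?thesis
  proof (intro allI impI)
    fix i assume i: "1 \<le> i \<and> i \<le> n"
    show "snd (procedure enum F n) i = {c. cumulative F n i c} \<and>
           fst (procedure enum F n) i = {c. volatile F n i c}"
    proof (cases "i = n")
      case True
      then show ?thesis using assms(1) unfolding p by (auto simp: cumulative_def volatile_def)
    next
      case False
      then have "i \<le> n - 1" using i by linarith
      then show ?thesis using False i assms(1) unfolding p
        by (auto simp: cumulative_def volatile_def Vm_def Cm_def)
    qed
  qed
qed

end
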